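(* For finite-dimensional $\mathcal H_X,\mathcal H_Y,\mathcal H_A,\mathcal H_B$, the set $\mathrm{LOCC}^*$ of maps from $\mathbf L(\mathcal H_X\otimes\mathcal H_Y)$ to $\mathbf L(\mathcal H_A\otimes\mathcal H_B)$ coincides with the set $\mathrm{SEP}$ of bipartite separable operations.
   Context: A quantum instrument with classical input $i$ is a family $\{\mathcal A_{o|i}\}_o$ (finite index sets) of completely positive linear maps with $\sum_o\mathcal A_{o|i}$ trace preserving for each $i$. $\mathrm{LOCC}^*$ is the set of completely positive trace preserving (CPTP) maps of the form $\mathcal M=\sum_{i_A,i_B,o_A,o_B}p(i_A,i_B|o_A,o_B)\,\mathcal A_{o_A|i_A}\otimes\mathcal B_{o_B|i_B}$, where $\{\mathcal A_{o_A|i_A}\}_{o_A}$ are instruments $\mathbf L(\mathcal H_X)\to\mathbf L(\mathcal H_A)$, $\{\mathcal B_{o_B|i_B}\}_{o_B}$ are instruments $\mathbf L(\mathcal H_Y)\to\mathbf L(\mathcal H_B)$, and $p(i_A,i_B|o_A,o_B)\ge0$ with $\sum_{i_A,i_B}p(i_A,i_B|o_A,o_B)=1$ for all $o_A,o_B$. $\mathrm{SEP}$ is the set of CPTP maps of the form $\sum_{k=1}^L\mathcal E^A_k\otimes\mathcal E^B_k$ with completely positive maps $\mathcal E^A_k:\mathbf L(\mathcal H_X)\to\mathbf L(\mathcal H_A)$, $\mathcal E^B_k:\mathbf L(\mathcal H_Y)\to\mathbf L(\mathcal H_B)$ (equivalently, CPTP maps with Kraus operators of product form $E_k\otimes F_k$).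 *)

theory Defs
  imports "HOL-Analysis.Analysis"
begin

text \<open>Operators on a finite-dimensional Hilbert space with orthonormal basis indexed by
  the finite type 'i are represented as matrices of type 'i => 'i => complex.
  The composite system X Y has basis indexed by 'x \<times> 'y.\<close>

type_synonym 'i op = "'i \<Rightarrow> 'i \<Rightarrow> complex"

definition matunit :: "'i \<Rightarrow> 'i \<Rightarrow> 'i op" where
  "matunit x x' = (\<lambda>i j. if i = x \<and> j = x' then 1 else 0)"

definition trace_op :: "('i::finite) op \<Rightarrow> complex" where
  "trace_op M = (\<Sum>i\<in>UNIV. M i i)"

definition psd_on :: "'i set \<Rightarrow> 'i op \<Rightarrow> bool" where
  "psd_on S M \<longleftrightarrow> (\<forall>v::'i \<Rightarrow> complex.
      let q = (\<Sum>i\<in>S. \<Sum>j\<in>S. cnj (v i) * M i j * v j) in Im q = 0 \<and> Re q \<ge> 0)"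

definition lin_map :: "('i op \<Rightarrow> 'j op) \<Rightarrow> bool" where
  "lin_map \<Phi> \<longleftrightarrow> (\<forall>M N. \<Phi> (\<lambda>i j. M i j + N i j) = (\<lambda>a b. \<Phi> M a b + \<Phi> N a b)) \<and>
                  (\<forall>c M. \<Phi> (\<lambda>i j. c * M i j) = (\<lambda>a b. c * \<Phi> M a b))"

text \<open>id_n tensor Phi, acting blockwise on operators on C^n tensor H (ancilla indices < n).\<close>
definition ampl :: "('i op \<Rightarrow> 'j op) \<Rightarrow> (nat \<times> 'i) op \<Rightarrow> (nat \<times> 'j) op" where
  "ampl \<Phi> M = (\<lambda>(k, a) (l, b). \<Phi> (\<lambda>x y. M (k, x) (l, y)) a b)"

definition CP :: "('i::finite op \<Rightarrow> 'j::finite op) \<Rightarrow> bool" where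
  "CP \<Phi> \<longleftrightarrow> lin_map \<Phi> \<and>
     (\<forall>n::nat. \<forall>M. psd_on ({..<n} \<times> UNIV) M \<longrightarrow> psd_on ({..<n} \<times> UNIV) (ampl \<Phi> M))"

definition TP :: "('i::finite op \<Rightarrow> 'j::finite op) \<Rightarrow> bool" where
  "TP \<Phi> \<longleftrightarrow> (\<forall>M. trace_op (\<Phi> M) = trace_op M)"

definition CPTP :: "('i::finite op \<Rightarrow> 'j::finite op) \<Rightarrow> bool" where
  "CPTP \<Phi> \<longleftrightarrow> CP \<Phi> \<and> TP \<Phi>"

text \<open>Tensor product of linear maps, defined on matrix units and extended linearly.\<close>
definition tensor_map ::
  "('x::finite op \<Rightarrow> 'a op) \<Rightarrow> ('y::finite op \<Rightarrow> 'b op) \<Rightarrow> ('x \<times> 'y) op \<Rightarrow> ('a \<times> 'b) op" where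
  "tensor_map \<Phi> \<Psi> M = (\<lambda>(a, b) (a', b').
     \<Sum>x\<in>UNIV. \<Sum>x'\<in>UNIV. \<Sum>y\<in>UNIV. \<Sum>y'\<in>UNIV.
        M (x, y) (x', y') * \<Phi> (matunit x x') a a' * \<Psi> (matunit y y') b b')"

text \<open>A family of instruments with classical inputs I and outcomes O (finite index sets);
  A ot i is the CP map for outcome o given input i.\<close>
definition instruments ::
  "nat set \<Rightarrow> nat set \<Rightarrow> (nat \<Rightarrow> nat \<Rightarrow> ('i::finite op \<Rightarrow> 'j::finite op)) \<Rightarrow> bool" where
  "instruments Ins Outs A \<longleftrightarrow> finite Ins \<and> finite Outs \<and>
     (\<forall>i\<in>Ins. \<forall>ot\<in>Outs. CP (A ot i)) \<and>
     (\<forall>i\<in>Ins. TP (\<lambda>M a b. \<Sum>ot\<in>Outs. A ot i M a b))"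

definition LOCC_star ::
  "(('x::finite \<times> 'y::finite) op \<Rightarrow> ('a::finite \<times> 'b::finite) op) set" where
  "LOCC_star = {\<M>. CPTP \<M> \<and>
     (\<exists>IA OA IB OB (A :: nat \<Rightarrow> nat \<Rightarrow> ('x op \<Rightarrow> 'a op)) (B :: nat \<Rightarrow> nat \<Rightarrow> ('y op \<Rightarrow> 'b op))
        (p :: nat \<Rightarrow> nat \<Rightarrow> nat \<Rightarrow> nat \<Rightarrow> real).
        instruments IA OA A \<and> instruments IB OB B \<and>
        (\<forall>iA\<in>IA. \<forall>iB\<in>IB. \<forall>oA\<in>OA. \<forall>oB\<in>OB. p iA iB oA oB \<ge> 0) \<and>
        (\<forall>oA\<in>OA. \<forall>oB\<in>OB. (\<Sum>iA\<in>IA. \<Sum>iB\<in>IB. p iA iB oA oB) = 1) \<and>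
        \<M> = (\<lambda>\<rho> u v. \<Sum>iA\<in>IA. \<Sum>iB\<in>IB. \<Sum>oA\<in>OA. \<Sum>oB\<in>OB.
               complex_of_real (p iA iB oA oB) * tensor_map (A oA iA) (B oB iB) \<rho> u v))}"

definition SEP ::
  "(('x::finite \<times> 'y::finite) op \<Rightarrow> ('a::finite \<times> 'b::finite) op) set" where
  "SEP = {\<M>. CPTP \<M> \<and>
     (\<exists>(L::nat) (EA :: nat \<Rightarrow> ('x op \<Rightarrow> 'a op)) (EB :: nat \<Rightarrow> ('y op \<Rightarrow> 'b op)).
        (\<forall>k\<in>{1..L}. CP (EA k) \<and> CP (EB k)) \<and>
        \<M> = (\<lambda>\<rho> u v. \<Sum>k\<in>{1..L}. tensor_map (EA k) (EB k) \<rho> u v))}"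

end

theory Submission
  imports Defs "HOL-Library.Nat_Bijection"
begin


definition qf :: "'i set \<Rightarrow> 'i op \<Rightarrow> ('i \<Rightarrow> complex) \<Rightarrow> complex" where
  "qf S M v = (\<Sum>i\<in>S. \<Sum>j\<in>S. cnj (v i) * M i j * v j)"

lemma psd_on_qf: "psd_on S M \<longleftrightarrow> (\<forall>v. Im (qf S M v) = 0 \<and> Re (qf S M v) \<ge> 0)"
  by (simp add: psd_on_def qf_def Let_def)

lemma L1:
  fixes \<alpha> \<beta> :: complex
  assumes "\<And>t. Im (cnj t * \<alpha> + t * \<beta>) = 0 \<and> Re (cnj t * \<alpha> + t * \<beta>) \<ge> 0"
  shows "\<alpha> = 0 \<and> \<beta> = 0"
proof -
  have a: "Im (\<alpha> + \<beta>) = 0" "Re (\<alpha> + \<beta>) \<ge> 0" using assms[of 1] by auto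
  have b: "Re (\<alpha> + \<beta>) \<le> 0" using assms[of "-1"] by auto
  have c: "Re (\<beta> - \<alpha>) = 0" "Im (\<beta> - \<alpha>) \<le> 0" using assms[of "\<i>"] by auto
  have d: "Im (\<beta> - \<alpha>) \<ge> 0" using assms[of "-\<i>"] by auto
  from a b c d show ?thesis by (simp add: complex_eq_iff)
qed

lemma qf_two:
  fixes \<rho> :: "('i::finite) op"
  assumes "x \<noteq> y"
  shows "qf UNIV \<rho> (\<lambda>i. if i = x then a else if i = y then b else 0) =
     cnj a * \<rho> x x * a + cnj a * \<rho> x y * b + cnj b * \<rho> y x * a + cnj b * \<rho> y y * b"
proof -
  have v: "(\<lambda>i. if i = x then a else if i = y then b else 0) = (\<lambda>i. (if i = x then a else 0) + (if i = y then b else 0))"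
    using assms by auto
  have m1: "\<And>P (a::complex) z. (if P then a else 0) * z = (if P then a * z else 0)" by simp
  have m2: "\<And>P (a::complex) z. z * (if P then a else 0) = (if P then z * a else 0)" by simp
  show ?thesis unfolding qf_def v
    by (simp add: distrib_left distrib_right sum.distrib m1 m2 sum.delta assms if_distrib[of cnj] cong: if_cong)
qed


lemma qf_one:
  fixes \<rho> :: "('i::finite) op"
  shows "qf UNIV \<rho> (\<lambda>i. if i = x then a else 0) = cnj a * \<rho> x x * a"
proof -
  have m1: "\<And>P (a::complex) z. (if P then a else 0) * z = (if P then a * z else 0)" by simp
  have m2: "\<And>P (a::complex) z. z * (if P then a else 0) = (if P then z * a else 0)" by simp
  show ?thesis unfolding qf_def
    by (simp add: m1 m2 if_distrib[of cnj] cong: if_cong)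
qed

lemma psd_diag:
  fixes \<rho> :: "('i::finite) op"
  assumes "psd_on UNIV \<rho>"
  shows "Im (\<rho> x x) = 0 \<and> Re (\<rho> x x) \<ge> 0"
  using assms[unfolded psd_on_qf, rule_format, of "\<lambda>i. if i = x then 1 else 0"]
  by (simp add: qf_one)

lemma psd_zero_diag:
  fixes \<rho> :: "('i::finite) op"
  assumes "psd_on UNIV \<rho>" "\<And>x. \<rho> x x = 0"
  shows "\<rho> = (\<lambda>_ _. 0)"
proof (intro ext)
  fix x y
  show "\<rho> x y = 0"
  proof (cases "x = y")
    case True then show ?thesis using assms(2) by simp
  next
    case False
    have "\<And>t. Im (cnj t * \<rho> y x + t * \<rho> x y) = 0 \<and> Re (cnj t * \<rho> y x + t * \<rho> x y) \<ge> 0"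
    proof -
      fix t
      show "Im (cnj t * \<rho> y x + t * \<rho> x y) = 0 \<and> Re (cnj t * \<rho> y x + t * \<rho> x y) \<ge> 0"
        using assms(1)[unfolded psd_on_qf, rule_format, of "\<lambda>i. if i = x then 1 else if i = y then t else 0"]
        by (simp add: qf_two[OF False] assms(2) mult.commute)
    qed
    from L1[OF this] show ?thesis by simp
  qed
qed

lemma lin_map_add:
  assumes "lin_map \<Phi>"
  shows "\<Phi> (\<lambda>i j. M i j + N i j) = (\<lambda>a b. \<Phi> M a b + \<Phi> N a b)"
  using assms unfolding lin_map_def by blast

lemma dsum:
  fixes f :: "'i::finite \<Rightarrow> 'j::finite \<Rightarrow> complex"
  shows "(\<Sum>x\<in>UNIV. \<Sum>x'\<in>UNIV. if i = x \<and> j = x' then f x x' else 0) = f i j"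
proof -
  have "(\<Sum>x'\<in>UNIV. if i = x \<and> j = x' then f x x' else 0) = (if i = x then f x j else 0)" for x
    by (cases "i = x") auto
  then show ?thesis by simp
qed

lemma lin_map_zero:
  assumes "lin_map \<Phi>"
  shows "\<Phi> (\<lambda>i j. 0) = (\<lambda>a b. 0)"
proof -
  have "\<Phi> (\<lambda>i j. 0 * (\<lambda>i j. (0::complex)) i j) = (\<lambda>a b. 0 * \<Phi> (\<lambda>i j. 0) a b)"
    using assms unfolding lin_map_def by (elim conjE allE) assumption
  then show ?thesis by simp
qed

lemma lin_map_sum:
  assumes "lin_map \<Phi>" "finite S"
  shows "\<Phi> (\<lambda>i j. \<Sum>s\<in>S. f s i j) = (\<lambda>a b. \<Sum>s\<in>S. \<Phi> (f s) a b)"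
  using assms(2)
proof (induction S rule: finite_induct)
  case empty then show ?case using lin_map_zero[OF assms(1)] by simp
next
  case (insert x F)
  have "\<Phi> (\<lambda>i j. \<Sum>s\<in>insert x F. f s i j) = \<Phi> (\<lambda>i j. f x i j + (\<Sum>s\<in>F. f s i j))"
    using insert by simp
  also have "\<dots> = (\<lambda>a b. \<Phi> (\<lambda>i j. f x i j) a b + \<Phi> (\<lambda>i j. \<Sum>s\<in>F. f s i j) a b)"
    using lin_map_add[OF assms(1), of "f x" "\<lambda>i j. \<Sum>s\<in>F. f s i j"] by simp
  also have "\<dots> = (\<lambda>a b. \<Sum>s\<in>insert x F. \<Phi> (f s) a b)"
    using insert by simp
  finally show ?case .
qed

lemma lin_map_scale:
  assumes "lin_map \<Phi>"
  shows "\<Phi> (\<lambda>i j. c * M i j) = (\<lambda>a b. c * \<Phi> M a b)"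
  using assms unfolding lin_map_def by blast

lemma expand:
  fixes \<Phi> :: "('i::finite) op \<Rightarrow> 'j op"
  assumes "lin_map \<Phi>"
  shows "\<Phi> M = (\<lambda>a b. \<Sum>x\<in>UNIV. \<Sum>x'\<in>UNIV. M x x' * \<Phi> (matunit x x') a b)"
proof -
  have M: "M = (\<lambda>i j. \<Sum>x\<in>UNIV. \<Sum>x'\<in>UNIV. M x x' * matunit x x' i j)"
    by (simp add: matunit_def if_distrib dsum cong: if_cong)
  have "\<Phi> M = \<Phi> (\<lambda>i j. \<Sum>x\<in>UNIV. \<Sum>x'\<in>UNIV. M x x' * matunit x x' i j)"
    by (subst M) (rule refl)
  also have "\<dots> = (\<lambda>a b. \<Sum>x\<in>UNIV. \<Phi> (\<lambda>i j. \<Sum>x'\<in>UNIV. M x x' * matunit x x' i j) a b)"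
    by (rule lin_map_sum[OF assms]) simp
  also have "\<dots> = (\<lambda>a b. \<Sum>x\<in>UNIV. \<Sum>x'\<in>UNIV. \<Phi> (\<lambda>i j. M x x' * matunit x x' i j) a b)"
    by (simp add: lin_map_sum[OF assms])
  also have "\<dots> = (\<lambda>a b. \<Sum>x\<in>UNIV. \<Sum>x'\<in>UNIV. M x x' * \<Phi> (matunit x x') a b)"
    using lin_map_scale[OF assms] by (simp add: lin_map_scale[OF assms, of "M _ _" "matunit _ _", simplified])
  finally show ?thesis .
qed

lemma sum_lessThan1: "(\<Sum>p\<in>{..<Suc 0} \<times> (UNIV::'i::finite set). g p) = (\<Sum>x\<in>UNIV. g (0, x))"
  by (simp add: sum.cartesian_product' lessThan_Suc)

lemma CP_pos:
  fixes \<Phi> :: "('i::finite) op \<Rightarrow> ('j::finite) op"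
  assumes "CP \<Phi>" "psd_on UNIV \<rho>"
  shows "psd_on UNIV (\<Phi> \<rho>)"
proof -
  define M :: "(nat \<times> 'i) op" where "M = (\<lambda>(k, x) (l, y). \<rho> x y)"
  have "psd_on ({..<Suc 0} \<times> UNIV) M"
    unfolding psd_on_qf
  proof
    fix v :: "nat \<times> 'i \<Rightarrow> complex"
    have "qf ({..<Suc 0} \<times> UNIV) M v = qf UNIV \<rho> (\<lambda>x. v (0, x))"
      unfolding qf_def sum_lessThan1 by (simp add: M_def)
    then show "Im (qf ({..<Suc 0} \<times> UNIV) M v) = 0 \<and> 0 \<le> Re (qf ({..<Suc 0} \<times> UNIV) M v)"
      using assms(2) unfolding psd_on_qf by simp
  qed
  then have P: "psd_on ({..<Suc 0} \<times> UNIV) (ampl \<Phi> M)"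
    using assms(1) unfolding CP_def by blast
  show ?thesis unfolding psd_on_qf
  proof
    fix v :: "'j \<Rightarrow> complex"
    have "qf ({..<Suc 0} \<times> UNIV) (ampl \<Phi> M) (\<lambda>(k, a). v a) = qf UNIV (\<Phi> \<rho>) v"
      unfolding qf_def sum_lessThan1 by (simp add: M_def ampl_def)
    then show "Im (qf UNIV (\<Phi> \<rho>) v) = 0 \<and> 0 \<le> Re (qf UNIV (\<Phi> \<rho>) v)"
      using P unfolding psd_on_qf by metis
  qed
qed

lemma matunit_psd:
  fixes x :: "'i::finite"
  shows "psd_on UNIV (matunit x x)"
  unfolding psd_on_qf
proof
  fix v :: "'i \<Rightarrow> complex"
  have "qf UNIV (matunit x x) v = cnj (v x) * v x"
  proof -
    have "\<And>i j. cnj (v i) * matunit x x i j * v j = (if x = i \<and> x = j then cnj (v i) * v j else 0)"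
      by (auto simp: matunit_def)
    then show ?thesis unfolding qf_def using dsum[of x x "\<lambda>i j. cnj (v i) * v j"] by simp
  qed
  then show "Im (qf UNIV (matunit x x) v) = 0 \<and> 0 \<le> Re (qf UNIV (matunit x x) v)"
    by (simp add: complex_mult_cnj)
qed


lemma qf_lin:
  "qf S (\<lambda>a b. c * P a b + d * Q a b) w = c * qf S P w + d * qf S Q w"
  unfolding qf_def by (simp add: algebra_simps sum.distrib sum_distrib_left)

lemma rank1_psd:
  fixes v :: "'i::finite \<Rightarrow> complex"
  shows "psd_on UNIV (\<lambda>i j. v i * cnj (v j))"
  unfolding psd_on_qf
proof
  fix w :: "'i \<Rightarrow> complex"
  define z where "z = (\<Sum>i\<in>UNIV. cnj (w i) * v i)"
  have "qf UNIV (\<lambda>i j. v i * cnj (v j)) w = z * cnj z"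
    unfolding qf_def z_def by (simp add: sum_product algebra_simps)
  then show "Im (qf UNIV (\<lambda>i j. v i * cnj (v j)) w) = 0 \<and> 0 \<le> Re (qf UNIV (\<lambda>i j. v i * cnj (v j)) w)"
    by (simp add: complex_mult_cnj)
qed

lemma trace_psd:
  fixes \<rho> :: "('i::finite) op"
  assumes "psd_on UNIV \<rho>"
  shows "Im (trace_op \<rho>) = 0 \<and> Re (trace_op \<rho>) \<ge> 0"
  using psd_diag[OF assms] unfolding trace_op_def by (simp add: Im_sum Re_sum sum_nonneg)

lemma qf_zero_mat:
  fixes G :: "('i::finite) op"
  assumes "\<And>w. qf UNIV G w = 0"
  shows "G = (\<lambda>_ _. 0)"
proof (rule psd_zero_diag)
  show "psd_on UNIV G" unfolding psd_on_qf using assms by simp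
  fix x show "G x x = 0" using assms[of "\<lambda>i. if i = x then 1 else 0"] by (simp add: qf_one)
qed

lemma CP_trace_zero:
  fixes F :: "('i::finite) op \<Rightarrow> ('j::finite) op"
  assumes cp: "CP F" and tz: "(\<Sum>y\<in>UNIV. trace_op (F (matunit y y))) = 0"
  shows "F (matunit y y') = (\<lambda>_ _. 0)"
proof -
  have lin: "lin_map F" using cp unfolding CP_def by blast
  have psdd: "psd_on UNIV (F (matunit y y))" for y by (rule CP_pos[OF cp matunit_psd])
  have diag0: "F (matunit y y) = (\<lambda>_ _. 0)" for y
  proof (rule psd_zero_diag[OF psdd])
    fix b
    have R: "Re (\<Sum>y\<in>UNIV. trace_op (F (matunit y y))) = 0" using tz by simp
    have "\<forall>y\<in>UNIV. Re (trace_op (F (matunit y y))) = 0"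
      using R unfolding Re_sum
      by (subst (asm) sum_nonneg_eq_0_iff) (auto intro: trace_psd[OF psdd, THEN conjunct2])
    then have "Re (trace_op (F (matunit y y))) = 0" by simp
    then have "(\<Sum>b\<in>UNIV. Re (F (matunit y y) b b)) = 0" unfolding trace_op_def Re_sum .
    then have "\<forall>b\<in>UNIV. Re (F (matunit y y) b b) = 0"
      by (subst (asm) sum_nonneg_eq_0_iff) (auto intro: psd_diag[OF psdd, THEN conjunct2])
    then show "F (matunit y y) b b = 0" using psd_diag[OF psdd, of y b] by (simp add: complex_eq_iff)
  qed
  show ?thesis
  proof (cases "y = y'")
    case True then show ?thesis using diag0 by simp
  next
    case False
    have "qf UNIV (F (matunit y y')) w = 0" for w
    proof -
      have "\<And>t. Im (cnj t * qf UNIV (F (matunit y y')) w + t * qf UNIV (F (matunit y' y)) w) = 0 \<and>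
                 Re (cnj t * qf UNIV (F (matunit y y')) w + t * qf UNIV (F (matunit y' y)) w) \<ge> 0"
      proof -
        fix t :: complex
        define v where "v = (\<lambda>i. if i = y then 1 else if i = y' then t else 0)"
        have P: "psd_on UNIV (F (\<lambda>i j. v i * cnj (v j)))" by (rule CP_pos[OF cp rank1_psd])
        have cv: "(\<lambda>i. cnj (v i)) = (\<lambda>i. if i = y then 1 else if i = y' then cnj t else 0)"
          unfolding v_def by auto
        have "F (\<lambda>i j. v i * cnj (v j)) a b = cnj t * F (matunit y y') a b + t * F (matunit y' y) a b" for a b
        proof -
          have "F (\<lambda>i j. v i * cnj (v j)) a b = (\<Sum>i\<in>UNIV. \<Sum>j\<in>UNIV. v i * cnj (v j) * F (matunit i j) a b)"
            by (subst expand[OF lin]) simp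
          also have "\<dots> = qf UNIV (\<lambda>i j. F (matunit i j) a b) (\<lambda>i. cnj (v i))"
            unfolding qf_def by (simp add: algebra_simps)
          also have "\<dots> = cnj t * F (matunit y y') a b + t * F (matunit y' y) a b"
            unfolding cv qf_two[OF False] using diag0 by (simp add: algebra_simps)
          finally show ?thesis .
        qed
        then have "F (\<lambda>i j. v i * cnj (v j)) = (\<lambda>a b. cnj t * F (matunit y y') a b + t * F (matunit y' y) a b)"
          by auto
        with P have "psd_on UNIV (\<lambda>a b. cnj t * F (matunit y y') a b + t * F (matunit y' y) a b)" by simp
        then show "Im (cnj t * qf UNIV (F (matunit y y')) w + t * qf UNIV (F (matunit y' y)) w) = 0 \<and>
                 Re (cnj t * qf UNIV (F (matunit y y')) w + t * qf UNIV (F (matunit y' y)) w) \<ge> 0"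
          unfolding psd_on_qf qf_lin by blast
      qed
      from L1[OF this] show ?thesis by simp
    qed
    then show ?thesis by (rule qf_zero_mat)
  qed
qed


lemma qf_scale: "qf S (\<lambda>a b. c * P a b) w = c * qf S P w"
  unfolding qf_def by (simp add: algebra_simps sum_distrib_left)

lemma CP_scale:
  assumes "CP \<Phi>" "c \<ge> 0"
  shows "CP (\<lambda>M a b. complex_of_real c * \<Phi> M a b)"
proof -
  have lin: "lin_map \<Phi>" using assms(1) unfolding CP_def by blast
  have "lin_map (\<lambda>M a b. complex_of_real c * \<Phi> M a b)"
    unfolding lin_map_def
    by (simp add: lin_map_add[OF lin] lin_map_scale[OF lin] algebra_simps)
  moreover have "psd_on ({..<n} \<times> UNIV) (ampl (\<lambda>M a b. complex_of_real c * \<Phi> M a b) M)"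
    if "psd_on ({..<n} \<times> UNIV) M" for n M
  proof -
    have P: "psd_on ({..<n} \<times> UNIV) (ampl \<Phi> M)" using that assms(1) unfolding CP_def by blast
    have e: "ampl (\<lambda>M a b. complex_of_real c * \<Phi> M a b) M = (\<lambda>x y. complex_of_real c * ampl \<Phi> M x y)"
      by (auto simp: ampl_def fun_eq_iff split: prod.split)
    show ?thesis using P assms(2) unfolding e psd_on_qf qf_scale by simp
  qed
  ultimately show ?thesis unfolding CP_def by blast
qed

lemma CP_zero: "CP (\<lambda>M (a::'j::finite) (b::'j). 0::complex)"
proof -
  have e: "ampl (\<lambda>M (a::'j) (b::'j). 0::complex) M = (\<lambda>x y. 0)" for M :: "(nat \<times> 'i) op"
    by (auto simp: ampl_def fun_eq_iff split: prod.split)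
  show ?thesis unfolding CP_def lin_map_def psd_on_qf e by (simp add: qf_def)
qed

lemma tensor_scale1:
  "tensor_map (\<lambda>M a b. c * \<Phi> M a b) \<Psi> = (\<lambda>M u v. c * tensor_map \<Phi> \<Psi> M u v)"
  by (auto simp: tensor_map_def fun_eq_iff sum_distrib_left algebra_simps split: prod.split)

lemma tensor_scale2:
  "tensor_map \<Phi> (\<lambda>M a b. c * \<Psi> M a b) = (\<lambda>M u v. c * tensor_map \<Phi> \<Psi> M u v)"
  by (auto simp: tensor_map_def fun_eq_iff sum_distrib_left algebra_simps split: prod.split)

lemma tensor_zero2:
  assumes "\<And>y y'. \<Psi> (matunit y y') = (\<lambda>_ _. 0)"
  shows "tensor_map \<Phi> \<Psi> = (\<lambda>M u v. 0)"
  by (auto simp: tensor_map_def fun_eq_iff assms split: prod.split)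

lemma tensor_zero1:
  assumes "\<And>y y'. \<Phi> (matunit y y') = (\<lambda>_ _. 0)"
  shows "tensor_map \<Phi> \<Psi> = (\<lambda>M u v. 0)"
  by (auto simp: tensor_map_def fun_eq_iff assms split: prod.split)


lemma locc_sub_sep:
  assumes "\<M> \<in> (LOCC_star :: (('x::finite \<times> 'y::finite) op \<Rightarrow> ('a::finite \<times> 'b::finite) op) set)"
  shows "\<M> \<in> SEP"
proof -
  from assms obtain IA OA IB OB and A :: "nat \<Rightarrow> nat \<Rightarrow> ('x op \<Rightarrow> 'a op)"
    and B :: "nat \<Rightarrow> nat \<Rightarrow> ('y op \<Rightarrow> 'b op)" and p :: "nat \<Rightarrow> nat \<Rightarrow> nat \<Rightarrow> nat \<Rightarrow> real"
    where cptp: "CPTP \<M>" and iA: "instruments IA OA A" and iB: "instruments IB OB B"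
      and pnn: "\<forall>iA\<in>IA. \<forall>iB\<in>IB. \<forall>oA\<in>OA. \<forall>oB\<in>OB. p iA iB oA oB \<ge> 0"
      and Meq: "\<M> = (\<lambda>\<rho> u v. \<Sum>iA\<in>IA. \<Sum>iB\<in>IB. \<Sum>oA\<in>OA. \<Sum>oB\<in>OB.
               complex_of_real (p iA iB oA oB) * tensor_map (A oA iA) (B oB iB) \<rho> u v)"
    unfolding LOCC_star_def by blast
  define S where "S = IA \<times> IB \<times> OA \<times> OB"
  have fS: "finite S" using iA iB unfolding S_def instruments_def by auto
  obtain h where h: "bij_betw h {1 .. card S} S" using ex_bij_betw_nat_finite_1[OF fS] by blast
  define EA where "EA k = (case h k of (iA, iB, oA, oB) \<Rightarrow>
      (\<lambda>M a b. complex_of_real (p iA iB oA oB) * A oA iA M a b))" for k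
  define EB where "EB k = (case h k of (iA, iB, oA, oB) \<Rightarrow> B oB iB)" for k
  have cp: "CP (EA k) \<and> CP (EB k)" if "k \<in> {1 .. card S}" for k
  proof -
    obtain a1 b1 a2 b2 where hk: "h k = (a1, b1, a2, b2)" by (cases "h k") auto
    have "h k \<in> S" using h that by (auto simp: bij_betw_def)
    then have m: "a1 \<in> IA" "b1 \<in> IB" "a2 \<in> OA" "b2 \<in> OB" unfolding S_def hk by auto
    show ?thesis unfolding EA_def EB_def hk using m iA iB pnn
      by (auto simp: instruments_def intro!: CP_scale)
  qed
  define G where "G \<rho> u v s = (case s of (iA, iB, oA, oB) \<Rightarrow>
      complex_of_real (p iA iB oA oB) * tensor_map (A oA iA) (B oB iB) \<rho> u v)" for \<rho> u v s
  have "\<M> = (\<lambda>\<rho> u v. \<Sum>k\<in>{1 .. card S}. tensor_map (EA k) (EB k) \<rho> u v)"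
  proof (intro ext)
    fix \<rho> u v
    have "(\<Sum>k\<in>{1 .. card S}. tensor_map (EA k) (EB k) \<rho> u v) = (\<Sum>k\<in>{1 .. card S}. G \<rho> u v (h k))"
    proof (rule sum.cong[OF refl])
      fix k
      obtain a1 b1 a2 b2 where hk: "h k = (a1, b1, a2, b2)" by (cases "h k") auto
      show "tensor_map (EA k) (EB k) \<rho> u v = G \<rho> u v (h k)"
        unfolding EA_def EB_def G_def hk by (simp add: tensor_scale1)
    qed
    also have "\<dots> = sum (G \<rho> u v) S" by (rule sum.reindex_bij_betw[OF h])
    also have "\<dots> = (\<Sum>iA\<in>IA. \<Sum>iB\<in>IB. \<Sum>oA\<in>OA. \<Sum>oB\<in>OB.
               complex_of_real (p iA iB oA oB) * tensor_map (A oA iA) (B oB iB) \<rho> u v)"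
      unfolding S_def G_def by (simp add: sum.cartesian_product')
    finally show "\<M> \<rho> u v = (\<Sum>k\<in>{1 .. card S}. tensor_map (EA k) (EB k) \<rho> u v)"
      unfolding Meq by simp
  qed
  then show ?thesis unfolding SEP_def using cptp cp by blast
qed


lemma mif1: "(if P then (a::complex) else 0) * z = (if P then a * z else 0)" by simp
lemma mif2: "z * (if P then (a::complex) else 0) = (if P then z * a else 0)" by simp

lemma sif: "(\<Sum>y\<in>S. if P then f y else (0::complex)) = (if P then \<Sum>y\<in>S. f y else 0)" by simp

lemma sum_UNIV_pair:
  "(\<Sum>p\<in>(UNIV::('a::finite \<times> 'b::finite) set). g p) = (\<Sum>a\<in>UNIV. \<Sum>b\<in>UNIV. g (a, b))"
  by (simp add: sum.cartesian_product' flip: UNIV_Times_UNIV)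

lemma trace_tensorA:
  fixes E :: "('x::finite) op \<Rightarrow> ('a::finite) op" and F :: "('y::finite) op \<Rightarrow> ('b::finite) op"
  assumes "lin_map E"
  shows "trace_op (tensor_map E F (\<lambda>(x, y) (x', y'). \<rho> x x' * (if y = y' then 1 else 0)))
       = trace_op (E \<rho>) * (\<Sum>y\<in>UNIV. trace_op (F (matunit y y)))"
proof -
  have pt: "tensor_map E F (\<lambda>(x, y) (x', y'). \<rho> x x' * (if y = y' then 1 else 0)) (a, b) (a, b)
      = E \<rho> a a * (\<Sum>y\<in>UNIV. F (matunit y y) b b)" for a b
  proof -
    have "tensor_map E F (\<lambda>(x, y) (x', y'). \<rho> x x' * (if y = y' then 1 else 0)) (a, b) (a, b)
        = (\<Sum>x\<in>UNIV. \<Sum>x'\<in>UNIV. \<Sum>y\<in>UNIV. \<rho> x x' * E (matunit x x') a a * F (matunit y y) b b)"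
      unfolding tensor_map_def by (simp add: mif1 mif2 cong: if_cong)
    also have "\<dots> = (\<Sum>x\<in>UNIV. \<Sum>x'\<in>UNIV. \<rho> x x' * E (matunit x x') a a) * (\<Sum>y\<in>UNIV. F (matunit y y) b b)"
      unfolding sum_distrib_right by (simp add: sum_distrib_left mult.assoc)
    also have "\<dots> = E \<rho> a a * (\<Sum>y\<in>UNIV. F (matunit y y) b b)"
      using expand[OF assms, of \<rho>] by simp
    finally show ?thesis .
  qed
  have "trace_op (tensor_map E F (\<lambda>(x, y) (x', y'). \<rho> x x' * (if y = y' then 1 else 0)))
      = (\<Sum>a\<in>UNIV. \<Sum>b\<in>UNIV. E \<rho> a a * (\<Sum>y\<in>UNIV. F (matunit y y) b b))"
    unfolding trace_op_def sum_UNIV_pair pt ..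
  also have "\<dots> = trace_op (E \<rho>) * (\<Sum>b\<in>UNIV. \<Sum>y\<in>UNIV. F (matunit y y) b b)"
    unfolding trace_op_def sum_product ..
  also have "\<dots> = trace_op (E \<rho>) * (\<Sum>y\<in>UNIV. trace_op (F (matunit y y)))"
    unfolding trace_op_def by (subst sum.swap) simp
  finally show ?thesis .
qed

lemma trace_tensorB:
  fixes E :: "('x::finite) op \<Rightarrow> ('a::finite) op" and F :: "('y::finite) op \<Rightarrow> ('b::finite) op"
  assumes "lin_map F"
  shows "trace_op (tensor_map E F (\<lambda>(x, y) (x', y'). (if x = x' then 1 else 0) * \<sigma> y y'))
       = (\<Sum>x\<in>UNIV. trace_op (E (matunit x x))) * trace_op (F \<sigma>)"
proof -
  have pt: "tensor_map E F (\<lambda>(x, y) (x', y'). (if x = x' then 1 else 0) * \<sigma> y y') (a, b) (a, b)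
      = (\<Sum>x\<in>UNIV. E (matunit x x) a a) * F \<sigma> b b" for a b
  proof -
    have "tensor_map E F (\<lambda>(x, y) (x', y'). (if x = x' then 1 else 0) * \<sigma> y y') (a, b) (a, b)
        = (\<Sum>x\<in>UNIV. \<Sum>y\<in>UNIV. \<Sum>y'\<in>UNIV. \<sigma> y y' * E (matunit x x) a a * F (matunit y y') b b)"
      unfolding tensor_map_def by (simp add: mif1 mif2 sif cong: if_cong)
    also have "\<dots> = (\<Sum>x\<in>UNIV. E (matunit x x) a a) * (\<Sum>y\<in>UNIV. \<Sum>y'\<in>UNIV. \<sigma> y y' * F (matunit y y') b b)"
      unfolding sum_distrib_right by (simp add: sum_distrib_left algebra_simps)
    also have "\<dots> = (\<Sum>x\<in>UNIV. E (matunit x x) a a) * F \<sigma> b b"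
      using expand[OF assms, of \<sigma>] by simp
    finally show ?thesis .
  qed
  have "trace_op (tensor_map E F (\<lambda>(x, y) (x', y'). (if x = x' then 1 else 0) * \<sigma> y y'))
      = (\<Sum>a\<in>UNIV. \<Sum>b\<in>UNIV. (\<Sum>x\<in>UNIV. E (matunit x x) a a) * F \<sigma> b b)"
    unfolding trace_op_def sum_UNIV_pair pt ..
  also have "\<dots> = (\<Sum>a\<in>UNIV. \<Sum>x\<in>UNIV. E (matunit x x) a a) * trace_op (F \<sigma>)"
    unfolding trace_op_def sum_product ..
  also have "\<dots> = (\<Sum>x\<in>UNIV. trace_op (E (matunit x x))) * trace_op (F \<sigma>)"
    unfolding trace_op_def by (subst sum.swap) simp
  finally show ?thesis .
qed

lemma two_point:
  assumes "finite S" "r \<in> S" "r' \<in> S" "r \<noteq> r'"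
  shows "(\<Sum>i\<in>S. if i = r then a else if i = r' then b else 0) = a + (b::real)"
proof -
  have "(\<Sum>i\<in>S. if i = r then a else if i = r' then b else 0) =
        (\<Sum>i\<in>S. (if i = r then a else 0) + (if i = r' then b else 0))"
    by (rule sum.cong) (use assms in auto)
  also have "\<dots> = a + b" using assms by (simp add: sum.distrib)
  finally show ?thesis .
qed


lemma trace_sum: "trace_op (\<lambda>u v. \<Sum>k\<in>K. f k u v) = (\<Sum>k\<in>K. trace_op (f k))"
  unfolding trace_op_def by (rule sum.swap)

lemma trace_scale: "trace_op (\<lambda>u v. c * f u v) = c * trace_op f"
  unfolding trace_op_def by (simp add: sum_distrib_left)

lemma dsum2:
  assumes "finite S1" "finite S2"
  shows "(\<Sum>r\<in>S1. \<Sum>k\<in>S2. if i = r \<and> j = k then c k else (0::complex)) = (if i \<in> S1 \<and> j \<in> S2 then c j else 0)"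
proof -
  have "(\<Sum>k\<in>S2. if i = r \<and> j = k then c k else (0::complex)) = (if i = r then (if j \<in> S2 then c j else 0) else 0)" for r
    using assms by (cases "i = r") auto
  then show ?thesis using assms by simp
qed

lemma sucmod_neq:
  assumes "2 \<le> R" "r < (R::nat)"
  shows "Suc r mod R \<noteq> r" "Suc r mod R < R"
proof -
  show "Suc r mod R < R" using assms by simp
  show "Suc r mod R \<noteq> r"
  proof (cases "Suc r = R")
    case True then show ?thesis using assms by auto
  next
    case False then have "Suc r < R" using assms by simp
    then show ?thesis by simp
  qed
qed



lemma sep_sub_locc:
  assumes "\<M> \<in> (SEP :: (('x::finite \<times> 'y::finite) op \<Rightarrow> ('a::finite \<times> 'b::finite) op) set)"
  shows "\<M> \<in> LOCC_star"
proof -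
  from assms obtain L and EA :: "nat \<Rightarrow> ('x op \<Rightarrow> 'a op)" and EB :: "nat \<Rightarrow> ('y op \<Rightarrow> 'b op)"
    where cptp: "CPTP \<M>" and cp: "\<forall>k\<in>{1..L}. CP (EA k) \<and> CP (EB k)"
      and Meq: "\<M> = (\<lambda>\<rho> u v. \<Sum>k\<in>{1..L}. tensor_map (EA k) (EB k) \<rho> u v)"
    unfolding SEP_def by blast
  have cpA: "CP (EA k)" and cpB: "CP (EB k)" if "k \<in> {1..L}" for k using cp that by auto
  have linA: "lin_map (EA k)" and linB: "lin_map (EB k)" if "k \<in> {1..L}" for k
    using cpA[OF that] cpB[OF that] unfolding CP_def by auto
  define cF where "cF k = (\<Sum>y\<in>UNIV. trace_op (EB k (matunit y y)))" for k
  define cE where "cE k = (\<Sum>x\<in>UNIV. trace_op (EA k (matunit x x)))" for k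
  have cFr: "Im (cF k) = 0 \<and> Re (cF k) \<ge> 0" if "k \<in> {1..L}" for k
  proof -
    have t: "Im (trace_op (EB k (matunit y y))) = 0 \<and> Re (trace_op (EB k (matunit y y))) \<ge> 0" for y
      by (rule trace_psd[OF CP_pos[OF cpB[OF that] matunit_psd]])
    then show ?thesis unfolding cF_def by (simp add: Im_sum Re_sum sum_nonneg)
  qed
  have cEr: "Im (cE k) = 0 \<and> Re (cE k) \<ge> 0" if "k \<in> {1..L}" for k
  proof -
    have t: "Im (trace_op (EA k (matunit y y))) = 0 \<and> Re (trace_op (EA k (matunit y y))) \<ge> 0" for y
      by (rule trace_psd[OF CP_pos[OF cpA[OF that] matunit_psd]])
    then show ?thesis unfolding cE_def by (simp add: Im_sum Re_sum sum_nonneg)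
  qed
  define \<alpha> where "\<alpha> k = Re (cF k) / real CARD('y)" for k
  define \<beta> where "\<beta> k = Re (cE k) / real CARD('x)" for k
  have \<alpha>nn: "\<alpha> k \<ge> 0" and \<beta>nn: "\<beta> k \<ge> 0" if "k \<in> {1..L}" for k
    using cFr[OF that] cEr[OF that] unfolding \<alpha>_def \<beta>_def by auto
  have \<alpha>c: "complex_of_real (\<alpha> k) = cF k / of_nat CARD('y)" if "k \<in> {1..L}" for k
    using cFr[OF that] unfolding \<alpha>_def by (simp add: complex_eq_iff)
  have \<beta>c: "complex_of_real (\<beta> k) = cE k / of_nat CARD('x)" if "k \<in> {1..L}" for k
    using cEr[OF that] unfolding \<beta>_def by (simp add: complex_eq_iff)
  have TPM: "trace_op (\<M> N) = trace_op N" for N using cptp unfolding CPTP_def TP_def by blast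
  have TPA: "trace_op (\<lambda>a b. \<Sum>ot\<in>{1..L}. complex_of_real (\<alpha> ot) * EA ot \<rho> a b) = trace_op \<rho>" for \<rho>
  proof -
    define N :: "('x \<times> 'y) op" where "N = (\<lambda>(x, y) (x', y'). \<rho> x x' * (if y = y' then 1 else 0))"
    have "trace_op (\<M> N) = (\<Sum>k\<in>{1..L}. trace_op (tensor_map (EA k) (EB k) N))"
      unfolding Meq by (rule trace_sum)
    also have "\<dots> = (\<Sum>k\<in>{1..L}. trace_op (EA k \<rho>) * cF k)"
      unfolding N_def cF_def by (rule sum.cong[OF refl]) (rule trace_tensorA[OF linA])
    finally have e1: "trace_op (\<M> N) = (\<Sum>k\<in>{1..L}. trace_op (EA k \<rho>) * cF k)" .
    have e2: "trace_op N = of_nat CARD('y) * trace_op \<rho>"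
      unfolding N_def trace_op_def sum_UNIV_pair by (simp add: sum_distrib_left mult.commute)
    have cne: "of_nat CARD('y) \<noteq> (0::complex)" by simp
    have "trace_op (\<lambda>a b. \<Sum>ot\<in>{1..L}. complex_of_real (\<alpha> ot) * EA ot \<rho> a b)
        = (\<Sum>k\<in>{1..L}. complex_of_real (\<alpha> k) * trace_op (EA k \<rho>))"
      by (simp add: trace_sum trace_scale)
    also have "\<dots> = (\<Sum>k\<in>{1..L}. trace_op (EA k \<rho>) * cF k) / of_nat CARD('y)"
      by (simp add: \<alpha>c sum_divide_distrib mult.commute)
    also have "\<dots> = trace_op \<rho>" using e1 e2 TPM[of N] cne by (metis nonzero_mult_div_cancel_left)
    finally show ?thesis .
  qed
  have TPB: "trace_op (\<lambda>a b. \<Sum>ot\<in>{1..L}. complex_of_real (\<beta> ot) * EB ot \<sigma> a b) = trace_op \<sigma>" for \<sigma>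
  proof -
    define N :: "('x \<times> 'y) op" where "N = (\<lambda>(x, y) (x', y'). (if x = x' then 1 else 0) * \<sigma> y y')"
    have "trace_op (\<M> N) = (\<Sum>k\<in>{1..L}. trace_op (tensor_map (EA k) (EB k) N))"
      unfolding Meq by (rule trace_sum)
    also have "\<dots> = (\<Sum>k\<in>{1..L}. cE k * trace_op (EB k \<sigma>))"
      unfolding N_def cE_def by (rule sum.cong[OF refl]) (rule trace_tensorB[OF linB])
    finally have e1: "trace_op (\<M> N) = (\<Sum>k\<in>{1..L}. cE k * trace_op (EB k \<sigma>))" .
    have e2: "trace_op N = of_nat CARD('x) * trace_op \<sigma>"
      unfolding N_def trace_op_def sum_UNIV_pair by (simp add: sum_distrib_left mult.commute)
    have cne: "of_nat CARD('x) \<noteq> (0::complex)" by simp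
    have "trace_op (\<lambda>a b. \<Sum>ot\<in>{1..L}. complex_of_real (\<beta> ot) * EB ot \<sigma> a b)
        = (\<Sum>k\<in>{1..L}. complex_of_real (\<beta> k) * trace_op (EB k \<sigma>))"
      by (simp add: trace_sum trace_scale)
    also have "\<dots> = (\<Sum>k\<in>{1..L}. cE k * trace_op (EB k \<sigma>)) / of_nat CARD('x)"
      by (simp add: \<beta>c sum_divide_distrib)
    also have "\<dots> = trace_op \<sigma>" using e1 e2 TPM[of N] cne by (metis nonzero_mult_div_cancel_left)
    finally show ?thesis .
  qed
  have zeroT: "tensor_map (EA k) (EB k) = (\<lambda>M u v. 0)" if "k \<in> {1..L}" "\<alpha> k * \<beta> k = 0" for k
  proof (cases "\<alpha> k = 0")
    case True
    then have "cF k = 0" using cFr[OF that(1)] unfolding \<alpha>_def by (simp add: complex_eq_iff)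
    then have "EB k (matunit y y') = (\<lambda>_ _. 0)" for y y'
      by (intro CP_trace_zero[OF cpB[OF that(1)]]) (simp add: cF_def)
    then show ?thesis by (rule tensor_zero2)
  next
    case False
    then have "\<beta> k = 0" using that(2) by simp
    then have "cE k = 0" using cEr[OF that(1)] unfolding \<beta>_def by (simp add: complex_eq_iff)
    then have "EA k (matunit y y') = (\<lambda>_ _. 0)" for y y'
      by (intro CP_trace_zero[OF cpA[OF that(1)]]) (simp add: cE_def)
    then show ?thesis by (rule tensor_zero1)
  qed
  define Q where "Q = (\<Sum>k\<in>{1..L}. if \<alpha> k * \<beta> k = 0 then 0 else 1 / (\<alpha> k * \<beta> k))"
  define R where "R = nat \<lceil>Q\<rceil> + 2"
  have R2: "R \<ge> 2" unfolding R_def by simp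
  have Rk: "real R * (\<alpha> k * \<beta> k) \<ge> 1" if "k \<in> {1..L}" "\<alpha> k * \<beta> k \<noteq> 0" for k
  proof -
    have pos: "\<alpha> k * \<beta> k > 0" using \<alpha>nn[OF that(1)] \<beta>nn[OF that(1)] that(2)
      by (simp add: less_le)
    have "1 / (\<alpha> k * \<beta> k) \<le> Q"
    proof -
      have "(if \<alpha> k * \<beta> k = 0 then 0 else 1 / (\<alpha> k * \<beta> k)) \<le> Q"
        unfolding Q_def
        by (rule member_le_sum) (use that \<alpha>nn \<beta>nn in auto)
      then show ?thesis using that(2) by simp
    qed
    also have "Q \<le> real R" unfolding R_def
      using real_nat_ceiling_ge[of Q] by simp
    finally have "1 / (\<alpha> k * \<beta> k) \<le> real R" .
    then show ?thesis using pos by (simp add: field_simps)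
  qed
  define w where "w k = (if \<alpha> k * \<beta> k = 0 then 0 else 1 / (real R * (\<alpha> k * \<beta> k)))" for k
  have w01: "0 \<le> w k \<and> w k \<le> 1" if "k \<in> {1..L}" for k
  proof (cases "\<alpha> k * \<beta> k = 0")
    case True then show ?thesis unfolding w_def by simp
  next
    case False
    have "real R * (\<alpha> k * \<beta> k) \<ge> 1" by (rule Rk[OF that False])
    then show ?thesis unfolding w_def using False by (simp add: field_simps)
  qed
  have wR: "of_nat R * complex_of_real (w k * \<alpha> k * \<beta> k) * tensor_map (EA k) (EB k) \<rho> u v
      = tensor_map (EA k) (EB k) \<rho> u v" if "k \<in> {1..L}" for k \<rho> u v
  proof (cases "\<alpha> k * \<beta> k = 0")
    case True then show ?thesis using zeroT[OF that] by simp
  next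
    case False
    have "R > 0" using R2 by simp
    then have "real R * (w k * \<alpha> k * \<beta> k) = 1" unfolding w_def using False by (simp add: field_simps)
    then have "of_nat R * complex_of_real (w k * \<alpha> k * \<beta> k) = 1"
      by (metis of_real_1 of_real_mult of_real_of_nat_eq)
    then show ?thesis by simp
  qed
  define A :: "nat \<Rightarrow> nat \<Rightarrow> ('x op \<Rightarrow> 'a op)" where
    "A ot i = (\<lambda>M a b. complex_of_real (\<alpha> ot) * EA ot M a b)" for ot i
  define B :: "nat \<Rightarrow> nat \<Rightarrow> ('y op \<Rightarrow> 'b op)" where
    "B ob j = (\<lambda>M a b. case prod_decode ob of (r, k) \<Rightarrow>
        if r = j then complex_of_real (\<beta> k) * EB k M a b else 0)" for ob j
  define OB where "OB = prod_encode ` ({..<R} \<times> {1..L})"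
  define p :: "nat \<Rightarrow> nat \<Rightarrow> nat \<Rightarrow> nat \<Rightarrow> real" where
    "p iA iB oA oB = (case prod_decode oB of (r, k) \<Rightarrow>
       if iB = r then (if oA = k then w k else 0)
       else if iB = Suc r mod R then (if oA = k then 1 - w k else 1) else 0)" for iA iB oA oB
  have Benc: "B (prod_encode (r, k)) j = (if r = j then (\<lambda>M a b. complex_of_real (\<beta> k) * EB k M a b)
      else (\<lambda>M a b. 0))" for r k j
    unfolding B_def by auto
  have instA: "instruments {0} {1..L} A"
    unfolding instruments_def
  proof (intro conjI ballI)
    fix i ot assume ot: "ot \<in> {1..L}"
    show "CP (A ot i)" unfolding A_def by (rule CP_scale[OF cpA[OF ot] \<alpha>nn[OF ot]])
  next
    fix i
    show "TP (\<lambda>M a b. \<Sum>ot\<in>{1..L}. A ot i M a b)" unfolding TP_def A_def using TPA by simp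
  qed simp_all
  have finOB: "finite OB" unfolding OB_def by simp
  have instB: "instruments {..<R} OB B"
    unfolding instruments_def
  proof (intro conjI ballI)
    fix i ob assume "ob \<in> OB"
    then obtain r k where o: "ob = prod_encode (r, k)" "k \<in> {1..L}" unfolding OB_def by auto
    show "CP (B ob i)" unfolding o Benc
      using CP_scale[OF cpB[OF o(2)] \<beta>nn[OF o(2)]] CP_zero by auto
  next
    fix j assume j: "j \<in> {..<R}"
    have "(\<Sum>ob\<in>OB. B ob j M a b) = (\<Sum>k\<in>{1..L}. complex_of_real (\<beta> k) * EB k M a b)" for M a b
    proof -
      have "(\<Sum>ob\<in>OB. B ob j M a b) = (\<Sum>rk\<in>{..<R} \<times> {1..L}. B (prod_encode rk) j M a b)"
        unfolding OB_def by (subst sum.reindex) (auto intro: inj_prod_encode)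
      also have "\<dots> = (\<Sum>r\<in>{..<R}. \<Sum>k\<in>{1..L}. if r = j then complex_of_real (\<beta> k) * EB k M a b else 0)"
        by (simp add: sum.cartesian_product' B_def)
      also have "\<dots> = (\<Sum>k\<in>{1..L}. complex_of_real (\<beta> k) * EB k M a b)"
        using j by (simp add: sif)
      finally show ?thesis .
    qed
    then show "TP (\<lambda>M a b. \<Sum>ob\<in>OB. B ob j M a b)" unfolding TP_def using TPB by simp
  qed (simp_all add: finOB)
  have pnn: "\<forall>iA\<in>{0}. \<forall>iB\<in>{..<R}. \<forall>oA\<in>{1..L}. \<forall>oB\<in>OB. p iA iB oA oB \<ge> 0"
  proof (intro ballI)
    fix iA iB oA oB assume "oB \<in> OB"
    then obtain r k where o: "oB = prod_encode (r, k)" "k \<in> {1..L}" unfolding OB_def by auto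
    show "p iA iB oA oB \<ge> 0" unfolding p_def o using w01[OF o(2)] by auto
  qed
  have psum: "\<forall>oA\<in>{1..L}. \<forall>oB\<in>OB. (\<Sum>iA\<in>{0}. \<Sum>iB\<in>{..<R}. p iA iB oA oB) = 1"
  proof (intro ballI)
    fix oA oB assume "oB \<in> OB"
    then obtain r k where o: "oB = prod_encode (r, k)" "r < R" "k \<in> {1..L}" unfolding OB_def by auto
    have "(\<Sum>iB\<in>{..<R}. p 0 iB oA oB) = (if oA = k then w k else 0) + (if oA = k then 1 - w k else 1)"
      unfolding p_def o prod_encode_inverse split
      by (rule two_point) (use sucmod_neq[OF R2 o(2)] o(2) in auto)
    then show "(\<Sum>iA\<in>{0}. \<Sum>iB\<in>{..<R}. p iA iB oA oB) = 1" by simp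
  qed
  have Meq2: "\<M> = (\<lambda>\<rho> u v. \<Sum>iA\<in>{0}. \<Sum>iB\<in>{..<R}. \<Sum>oA\<in>{1..L}. \<Sum>oB\<in>OB.
               complex_of_real (p iA iB oA oB) * tensor_map (A oA iA) (B oB iB) \<rho> u v)"
  proof (intro ext)
    fix \<rho> u v
    define c where "c k = complex_of_real (w k * \<alpha> k * \<beta> k) * tensor_map (EA k) (EB k) \<rho> u v" for k
    have pt: "complex_of_real (p 0 iB oA (prod_encode (r, k))) * tensor_map (A oA 0) (B (prod_encode (r, k)) iB) \<rho> u v
        = (if iB = r \<and> oA = k then c k else 0)" for iB oA r k
    proof (cases "r = iB")
      case True
      then show ?thesis unfolding Benc A_def p_def c_def
        by (simp add: tensor_scale1 tensor_scale2)
    next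
      case False
      have z: "tensor_map (A oA 0) (\<lambda>M a b. 0) \<rho> u v = 0"
        by (simp add: tensor_map_def split: prod.split)
      show ?thesis unfolding Benc using False z by simp
    qed
    have "(\<Sum>iA\<in>{0}. \<Sum>iB\<in>{..<R}. \<Sum>oA\<in>{1..L}. \<Sum>oB\<in>OB.
               complex_of_real (p iA iB oA oB) * tensor_map (A oA iA) (B oB iB) \<rho> u v)
      = (\<Sum>iB\<in>{..<R}. \<Sum>oA\<in>{1..L}. \<Sum>rk\<in>{..<R} \<times> {1..L}.
               complex_of_real (p 0 iB oA (prod_encode rk)) * tensor_map (A oA 0) (B (prod_encode rk) iB) \<rho> u v)"
      unfolding OB_def by (simp add: sum.reindex inj_prod_encode)
    also have "\<dots> = (\<Sum>iB\<in>{..<R}. \<Sum>oA\<in>{1..L}. \<Sum>r\<in>{..<R}. \<Sum>k\<in>{1..L}. if iB = r \<and> oA = k then c k else 0)"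
      by (simp add: sum.cartesian_product' pt)
    also have "\<dots> = (\<Sum>iB\<in>{..<R}. \<Sum>oA\<in>{1..L}. c oA)"
      by (simp add: dsum2)
    also have "\<dots> = (\<Sum>k\<in>{1..L}. of_nat R * c k)"
      by (simp add: sum_distrib_left)
    also have "\<dots> = (\<Sum>k\<in>{1..L}. tensor_map (EA k) (EB k) \<rho> u v)"
      unfolding c_def by (rule sum.cong[OF refl]) (metis wR mult.assoc)
    finally show "\<M> \<rho> u v = (\<Sum>iA\<in>{0}. \<Sum>iB\<in>{..<R}. \<Sum>oA\<in>{1..L}. \<Sum>oB\<in>OB.
               complex_of_real (p iA iB oA oB) * tensor_map (A oA iA) (B oB iB) \<rho> u v)"
      unfolding Meq by simp
  qed
  show ?thesis unfolding LOCC_star_def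
    using cptp instA instB pnn psum Meq2 by blast
qed


theorem mainTheorem13:
  shows "(LOCC_star :: (('x::finite \<times> 'y::finite) op \<Rightarrow> ('a::finite \<times> 'b::finite) op) set) = SEP"
  using locc_sub_sep sep_sub_locc by blast

end
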